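(* Let $k$ be a positive integer and let $p$ be the smallest positive integer such that $k<\kappa_p$ (in dimension $2$). Assume $p$ is a multiple of $4$. If $k-\kappa_{p-1}$ is not an odd multiple of $p/2$, then there exists a subset $\mathcal{X}$ of $\mathbb{P}^2_\circ$ with $\kappa(\mathcal{X})\le k$ and $|\mathcal{X}|=\lfloor\lambda(2,k)\rfloor$. Otherwise, there exists a subset $\mathcal{X}$ of $\mathbb{P}^2_\circ$ with $\kappa(\mathcal{X})\le k$ and $|\mathcal{X}|=\lfloor\lambda(2,k)\rfloor-1$.
   Context: A point of $\mathbb{Z}^2$ is primitive if its coordinates are relatively prime; $\mathbb{P}^2_\circ$ denotes the set of primitive points of $\mathbb{Z}^2$ whose first non-zero coordinate is positive. For a finite $\mathcal{X}\subset\mathbb{R}^2$, $\kappa(\mathcal{X})=\max_{i\in\{1,2\}}\sum_{x\in\mathcal{X}}|x_i|$. $B(2,p)=\{x\in\mathbb{R}^2:\|x\|_1\le p\}$; $N_p=|B(2,p)\cap\mathbb{P}^2_\circ|$ and $\kappa_p=\kappa(B(2,p)\cap\mathbb{P}^2_\circ)$ (with $N_0=\kappa_0=0$). With $p$ as in the claim, $\lambda(2,k)=N_{p-1}+\frac{2(k-\kappa_{p-1})}{p}$. *)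

theory Defs
  imports Complex_Main
begin

definition primitive :: "int \<times> int \<Rightarrow> bool" where
  "primitive x \<longleftrightarrow> gcd (fst x) (snd x) = 1"

definition P2o :: "(int \<times> int) set" where
  "P2o = {x. primitive x \<and> (fst x > 0 \<or> (fst x = 0 \<and> snd x > 0))}"

definition kappa :: "(int \<times> int) set \<Rightarrow> int" where
  "kappa X = max (\<Sum>x\<in>X. \<bar>fst x\<bar>) (\<Sum>x\<in>X. \<bar>snd x\<bar>)"

definition ballP :: "nat \<Rightarrow> (int \<times> int) set" where
  "ballP p = {x \<in> P2o. \<bar>fst x\<bar> + \<bar>snd x\<bar> \<le> int p}"

definition N2 :: "nat \<Rightarrow> nat" where
  "N2 p = card (ballP p)"

definition kappa2 :: "nat \<Rightarrow> int" where
  "kappa2 p = kappa (ballP p)"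

definition lambda2 :: "nat \<Rightarrow> nat \<Rightarrow> real" where
  "lambda2 k p = real (N2 (p - 1)) + 2 * (real k - real_of_int (kappa2 (p - 1))) / real p"

end

theory Submission
  imports Defs
begin

lemma gcd_odd_aux:
  fixes h :: int assumes "even h" shows "gcd (h+1) (h-1) = 1"
proof -
  let ?d = "gcd (h+1) (h-1)"
  have "?d dvd (h+1) - (h-1)" using gcd_dvd1 gcd_dvd2 by (rule dvd_diff)
  hence d2: "?d dvd 2" by simp
  have "?d dvd h+1" by (rule gcd_dvd1)
  hence "odd ?d" using assms by (metis dvd_trans even_plus_one_iff)
  moreover have "?d \<ge> 0" by simp
  moreover have "?d \<le> 2" using d2 by (simp add: zdvd_imp_le)
  moreover have "?d \<noteq> 0" using d2 by auto
  ultimately show ?thesis by presburger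
qed

lemma inv_subset:
  assumes fin: "finite L" and inv: "\<forall>x\<in>L. \<sigma> x \<in> L \<and> \<sigma> (\<sigma> x) = x \<and> \<sigma> x \<noteq> x"
  shows "2*t \<le> card L \<Longrightarrow> \<exists>S\<subseteq>L. card S = 2*t \<and> (\<forall>x\<in>S. \<sigma> x \<in> S)"
proof (induction t)
  case 0 then show ?case by (intro exI[of _ "{}"]) auto
next
  case (Suc t)
  then obtain S where S: "S \<subseteq> L" "card S = 2*t" "\<forall>x\<in>S. \<sigma> x \<in> S" by auto
  have "card S < card L" using Suc.prems S by simp
  then have "\<not> L \<subseteq> S" using card_mono[of S L] fin S(1) finite_subset
    by (metis card_mono finite_subset not_le)
  then obtain x where x: "x \<in> L" "x \<notin> S" by blast
  have sx: "\<sigma> x \<notin> S" using x S(3) inv by metis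
  have "\<sigma> x \<noteq> x" "\<sigma> x \<in> L" using inv x by auto
  have fS: "finite S" using S(1) fin finite_subset by blast
  show ?case
    apply (rule exI[of _ "insert x (insert (\<sigma> x) S)"])
    using S x sx fS \<open>\<sigma> x \<noteq> x\<close> \<open>\<sigma> x \<in> L\<close> inv by auto
qed

lemma sum_swap:
  fixes S :: "(int \<times> int) set"
  assumes "finite S" and "\<forall>x\<in>S. \<sigma> x \<in> S \<and> \<sigma> (\<sigma> x) = x \<and> \<bar>fst (\<sigma> x)\<bar> = \<bar>snd x\<bar>"
  shows "(\<Sum>x\<in>S. \<bar>fst x\<bar>) = (\<Sum>x\<in>S. \<bar>snd x\<bar>)"
proof -
  have bij: "bij_betw \<sigma> S S"
    by (rule bij_betw_byWitness[of _ _ \<sigma>]) (use assms(2) in auto)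
  have "(\<Sum>x\<in>S. \<bar>fst (\<sigma> x)\<bar>) = (\<Sum>x\<in>S. \<bar>fst x\<bar>)"
    using sum.reindex_bij_betw[OF bij, of "\<lambda>x. \<bar>fst x\<bar>"] by simp
  moreover have "(\<Sum>x\<in>S. \<bar>fst (\<sigma> x)\<bar>) = (\<Sum>x\<in>S. \<bar>snd x\<bar>)"
    using assms(2) by (intro sum.cong) auto
  ultimately show ?thesis by simp
qed

lemma sum_norm:
  fixes S :: "(int \<times> int) set"
  assumes "finite S" "\<forall>x\<in>S. \<bar>fst x\<bar> + \<bar>snd x\<bar> = c"
  shows "(\<Sum>x\<in>S. \<bar>fst x\<bar>) + (\<Sum>x\<in>S. \<bar>snd x\<bar>) = c * int (card S)"
proof -
  have "(\<Sum>x\<in>S. \<bar>fst x\<bar>) + (\<Sum>x\<in>S. \<bar>snd x\<bar>) = (\<Sum>x\<in>S. \<bar>fst x\<bar> + \<bar>snd x\<bar>)"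
    by (simp add: sum.distrib)
  also have "\<dots> = (\<Sum>x\<in>S. c)" using assms(2) by (intro sum.cong) auto
  finally show ?thesis by simp
qed

lemma finite_ballP: "finite (ballP p)"
proof -
  have "ballP p \<subseteq> {-int p..int p} \<times> {-int p..int p}"
    unfolding ballP_def by auto
  thus ?thesis by (rule finite_subset) auto
qed

definition sig :: "int \<times> int \<Rightarrow> int \<times> int" where
  "sig x = (if snd x > 0 then (snd x, fst x) else (- snd x, - fst x))"

theorem lemma5p1:
  fixes k p :: nat
  assumes "k > 0"
    and "p > 0" and "int k < kappa2 p"
    and "\<forall>q. 0 < q \<and> q < p \<longrightarrow> \<not> (int k < kappa2 q)"
    and "4 dvd p"
  shows "(\<not> (\<exists>m::int. odd m \<and> 2 * (int k - kappa2 (p - 1)) = m * int p)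
            \<longrightarrow> (\<exists>X. X \<subseteq> P2o \<and> finite X \<and> kappa X \<le> int k
                     \<and> int (card X) = \<lfloor>lambda2 k p\<rfloor>))
       \<and> ((\<exists>m::int. odd m \<and> 2 * (int k - kappa2 (p - 1)) = m * int p)
            \<longrightarrow> (\<exists>X. X \<subseteq> P2o \<and> finite X \<and> kappa X \<le> int k
                     \<and> int (card X) = \<lfloor>lambda2 k p\<rfloor> - 1))"
proof -
  define P where "P = int p"
  have "\<exists>h. P = 2*h \<and> even h"
  proof -
    obtain c where "p = 4*c" using assms(5) by blast
    then show ?thesis unfolding P_def by (intro exI[of _ "2 * int c"]) simp
  qed
  then obtain h where h: "P = 2*h" "even h" by blast
  have p4: "p \<ge> 4" using assms(2,5) by (simp add: dvd_imp_le)
  have h2: "h \<ge> 2" using p4 h unfolding P_def by linarith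
  define B where "B = ballP (p-1)"
  define L where "L = {x\<in>P2o. \<bar>fst x\<bar> + \<bar>snd x\<bar> = P}"
  define Sx where "Sx = (\<lambda>A::(int\<times>int) set. \<Sum>x\<in>A. \<bar>fst x\<bar>)"
  define Sy where "Sy = (\<lambda>A::(int\<times>int) set. \<Sum>x\<in>A. \<bar>snd x\<bar>)"
  have ballp: "ballP p = B \<union> L" unfolding B_def L_def ballP_def P_def using assms(2) by auto
  have disj: "B \<inter> L = {}" unfolding B_def L_def ballP_def P_def using assms(2) by auto
  have finB: "finite B" unfolding B_def by (rule finite_ballP)
  have finL: "finite L" using finite_ballP[of p] ballp by auto
  have BP: "B \<subseteq> P2o" unfolding B_def ballP_def by auto
  have LP: "L \<subseteq> P2o" unfolding L_def by auto
  have Lprop: "fst x > 0 \<and> snd x \<noteq> 0" if "x \<in> L" for x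
  proof -
    obtain a b where x: "x = (a,b)" by force
    have g: "gcd a b = 1" and pos: "a > 0 \<or> (a = 0 \<and> b > 0)" and n: "\<bar>a\<bar> + \<bar>b\<bar> = P"
      using that x unfolding L_def P2o_def primitive_def by auto
    have "a \<noteq> 0" proof assume "a = 0" then have "\<bar>b\<bar> = P" using n by simp
      then show False using g \<open>a = 0\<close> h2 h by simp qed
    moreover have "b \<noteq> 0" proof assume "b = 0" then have "\<bar>a\<bar> = P" using n by simp
      then show False using g \<open>b = 0\<close> h2 h by simp qed
    ultimately show ?thesis using pos x by auto
  qed
  have sigL: "sig x \<in> L \<and> sig (sig x) = x \<and> sig x \<noteq> x \<and> \<bar>fst (sig x)\<bar> = \<bar>snd x\<bar>
      \<and> \<bar>snd (sig x)\<bar> = \<bar>fst x\<bar>" if "x \<in> L" for x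
  proof -
    obtain a b where x: "x = (a,b)" by force
    have g: "gcd a b = 1" and n: "\<bar>a\<bar> + \<bar>b\<bar> = P" and a: "a > 0" and b: "b \<noteq> 0"
      using that x Lprop[OF that] unfolding L_def P2o_def primitive_def by auto
    show ?thesis
    proof (cases "b > 0")
      case True
      have "sig x = (b,a)" unfolding sig_def x using True by simp
      moreover have "(b,a) \<noteq> (a,b)"
      proof assume "(b,a) = (a,b)" then have ab: "a = b" by (metis fst_conv snd_conv)
        then have "\<bar>a\<bar> = 1" using g by simp
        then show False using n ab h h2 by simp qed
      moreover have "(b,a) \<in> L"
      proof -
        have "gcd b a = 1" using g by (simp only: gcd.commute)
        moreover have "\<bar>b\<bar> + \<bar>a\<bar> = P" using n by linarith
        ultimately show ?thesis unfolding L_def P2o_def primitive_def using True by simp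
      qed
      moreover have "sig (b,a) = (a,b)" unfolding sig_def using a by simp
      ultimately show ?thesis using x by simp
    next
      case False
      then have bn: "b < 0" using b by simp
      have "sig x = (-b,-a)" unfolding sig_def x using False by simp
      moreover have "(-b,-a) \<noteq> (a,b)"
      proof assume "(-b,-a) = (a,b)" then have ab: "a = -b" by simp
        then have "\<bar>a\<bar> = 1" using g by (metis gcd_neg1_int gcd_idem_int abs_minus_cancel)
        then show False using n ab h h2 by simp qed
      moreover have "(-b,-a) \<in> L"
      proof -
        have "gcd (-b) (-a) = 1" using g by (simp only: gcd.commute gcd_neg1_int gcd_neg2_int)
        moreover have "\<bar>-b\<bar> + \<bar>-a\<bar> = P" using n by linarith
        ultimately show ?thesis unfolding L_def P2o_def primitive_def using bn by simp
      qed
      moreover have "sig (-b,-a) = (a,b)" unfolding sig_def using a by simp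
      ultimately show ?thesis using x by simp
    qed
  qed
  have normL: "\<forall>x\<in>L. \<bar>fst x\<bar> + \<bar>snd x\<bar> = P" unfolding L_def by auto
  have closed_sum: "2 * Sx S = P * int (card S) \<and> 2 * Sy S = P * int (card S)"
    if "S \<subseteq> L" "\<forall>x\<in>S. sig x \<in> S" for S
  proof -
    have fS: "finite S" using that finL finite_subset by blast
    have "Sx S = Sy S" unfolding Sx_def Sy_def
      by (rule sum_swap[OF fS, of sig]) (use that sigL in blast)
    moreover have "Sx S + Sy S = P * int (card S)" unfolding Sx_def Sy_def
      by (rule sum_norm[OF fS]) (use that normL in blast)
    ultimately show ?thesis by simp
  qed
  have SL: "2 * Sx L = P * int (card L)" using closed_sum[of L] sigL by blast
  have SLy: "2 * Sy L = P * int (card L)" using closed_sum[of L] sigL by blast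
  have kp: "kappa2 p = max (Sx B + Sx L) (Sy B + Sy L)"
    unfolding kappa2_def kappa_def ballp Sx_def Sy_def
    by (simp only: sum.union_disjoint[OF finB finL disj])
  have kp1: "kappa2 (p-1) = max (Sx B) (Sy B)"
    unfolding kappa2_def kappa_def B_def Sx_def Sy_def by simp
  have kp2: "2 * kappa2 p = 2 * kappa2 (p-1) + P * int (card L)"
  proof -
    have eqL: "Sx L = Sy L" using SL SLy by linarith
    show ?thesis using kp kp1 SL eqL unfolding max_def by (simp split: if_splits)
  qed
  define r where "r = int k - kappa2 (p-1)"
  have r0: "r \<ge> 0" using assms(4)[rule_format, of "p-1"] p4 unfolding r_def by simp
  have rL: "2*r < P * int (card L)" using kp2 assms(3) unfolding r_def by simp
  define m where "m = (2*r) div P"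
  define s where "s = (2*r) mod P"
  have Ppos: "P > 0" using h h2 by simp
  have dm: "2*r = m*P + s" unfolding m_def s_def by simp
  have s0: "0 \<le> s" "s < P" unfolding s_def using Ppos by auto
  have m0: "m \<ge> 0" unfolding m_def using r0 Ppos by (simp add: pos_imp_zdiv_nonneg_iff)
  have mL: "m < int (card L)"
  proof (rule ccontr)
    assume "\<not> m < int (card L)"
    then have "P * int (card L) \<le> P * m" using Ppos by (intro mult_left_mono) auto
    moreover have "m * P = P * m" by (rule mult.commute)
    ultimately show False using dm s0 rL by linarith
  qed
  have lam: "lambda2 k p = real_of_int (int (N2 (p-1))) + real_of_int (2*r) / real_of_int P"
    unfolding lambda2_def r_def P_def by simp
  have fl: "\<lfloor>lambda2 k p\<rfloor> = int (N2 (p-1)) + m"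
    unfolding lam m_def using floor_divide_of_int_eq[of "2*r" P, where ?'a=real] by simp
  have build: "\<exists>X. X \<subseteq> P2o \<and> finite X \<and> kappa X \<le> int k \<and> int (card X) = int (N2 (p-1)) + int (card S)"
    if "S \<subseteq> L" "Sx S \<le> r" "Sy S \<le> r" for S
  proof -
    have fS: "finite S" using that finL finite_subset by blast
    have dj: "B \<inter> S = {}" using disj that by blast
    have "kappa (B \<union> S) = max (Sx B + Sx S) (Sy B + Sy S)"
      unfolding kappa_def Sx_def Sy_def by (simp only: sum.union_disjoint[OF finB fS dj])
    also have "\<dots> \<le> int k" using that kp1 unfolding r_def by (simp add: max_def split: if_splits)
    finally have "kappa (B \<union> S) \<le> int k" .
    moreover have "card (B \<union> S) = card B + card S" using card_Un_disjoint[OF finB fS dj] .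
    moreover have "N2 (p-1) = card B" unfolding N2_def B_def by simp
    moreover have "B \<union> S \<subseteq> P2o" using BP LP that by blast
    ultimately show ?thesis using finB fS
      by (intro exI[of _ "B \<union> S"]) auto
  qed
  have inv: "\<forall>x\<in>L. sig x \<in> L \<and> sig (sig x) = x \<and> sig x \<noteq> x" using sigL by blast
  have evenset: "\<exists>S. S \<subseteq> L \<and> int (card S) = 2*t \<and> Sx S \<le> r \<and> Sy S \<le> r"
    if tt: "t \<ge> 0" "2*t \<le> m" for t :: int
  proof -
    have "2 * nat t \<le> card L" using tt mL by linarith
    then obtain S where S: "S \<subseteq> L" "card S = 2 * nat t" "\<forall>x\<in>S. sig x \<in> S"
      using inv_subset[OF finL inv, of "nat t"] by auto
    have "2 * Sx S = P * (2*t)" "2 * Sy S = P * (2*t)" using closed_sum[OF S(1,3)] S(2) tt by auto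
    moreover have "P * (2*t) \<le> 2*r" using dm s0 tt Ppos
      by (smt (verit) mult.commute mult_right_mono)
    ultimately show ?thesis using S tt by (intro exI[of _ S]) auto
  qed
  show ?thesis
  proof (cases "even m")
    case True
    then obtain t where t: "m = 2*t" by blast
    have nex: "\<not> (\<exists>m'::int. odd m' \<and> 2 * (int k - kappa2 (p - 1)) = m' * int p)"
    proof
      assume "\<exists>m'::int. odd m' \<and> 2 * (int k - kappa2 (p - 1)) = m' * int p"
      then obtain m' where "odd m'" "2*r = m' * P" unfolding r_def P_def by auto
      then have "m = m'" unfolding m_def using Ppos by simp
      then show False using True \<open>odd m'\<close> by simp
    qed
    obtain S where "S \<subseteq> L" "int (card S) = 2*t" "Sx S \<le> r" "Sy S \<le> r"
      using evenset[of t] t m0 by auto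
    then show ?thesis using build[of S] nex fl t by auto
  next
    case False
    then obtain t where t: "m = 2*t + 1" by (metis oddE)
    have t0: "t \<ge> 0" using t m0 by simp
    show ?thesis
    proof (cases "s = 0")
      case True
      have ex: "\<exists>m'::int. odd m' \<and> 2 * (int k - kappa2 (p - 1)) = m' * int p"
        using False dm True unfolding r_def P_def by auto
      obtain S where "S \<subseteq> L" "int (card S) = 2*t" "Sx S \<le> r" "Sy S \<le> r"
        using evenset[of t] t t0 by auto
      then show ?thesis using build[of S] ex fl t by auto
    next
      case sn0: False
      have nex: "\<not> (\<exists>m'::int. odd m' \<and> 2 * (int k - kappa2 (p - 1)) = m' * int p)"
      proof
        assume "\<exists>m'::int. odd m' \<and> 2 * (int k - kappa2 (p - 1)) = m' * int p"
        then obtain m' where "2*r = m' * P" unfolding r_def P_def by auto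
        then have "s = 0" unfolding s_def by simp
        then show False using sn0 by simp
      qed
      have "even s" using dm h by (metis dvd_add_right_iff dvd_mult dvd_triv_left)
      then have s2: "s \<ge> 2" using sn0 s0 by presburger
      define u where "u = (h+1, h-1)"
      have uL: "u \<in> L" unfolding u_def L_def P2o_def primitive_def
        using gcd_odd_aux[OF h(2)] h h2 by auto
      have su: "sig u = (h-1, h+1)" unfolding u_def sig_def using h2 by simp
      define L' where "L' = L - {u, sig u}"
      have finL': "finite L'" using finL unfolding L'_def by simp
      have inv': "\<forall>x\<in>L'. sig x \<in> L' \<and> sig (sig x) = x \<and> sig x \<noteq> x"
        unfolding L'_def using inv uL by (metis Diff_iff insert_iff empty_iff)
      have "sig u \<noteq> u" "sig u \<in> L" using inv uL by auto
      then have c2: "card {u, sig u} = 2" by auto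
      have "{u, sig u} \<subseteq> L" using uL \<open>sig u \<in> L\<close> by auto
      then have cL': "card L' = card L - 2" unfolding L'_def using finL c2
        by (simp add: card_Diff_subset)
      have "2 * nat t \<le> card L'" using cL' mL t t0 by linarith
      then obtain S where S: "S \<subseteq> L'" "card S = 2 * nat t" "\<forall>x\<in>S. sig x \<in> S"
        using inv_subset[OF finL' inv', of "nat t"] by auto
      have SL': "S \<subseteq> L" using S(1) unfolding L'_def by auto
      have "2 * Sx S = P * (2*t)" "2 * Sy S = P * (2*t)" using closed_sum[OF SL' S(3)] S(2) t0 by auto
      then have sxs: "Sx S = P*t" "Sy S = P*t" by auto
      have uS: "u \<notin> S" using S(1) unfolding L'_def by auto
      have fS: "finite S" using SL' finL finite_subset by blast
      have "Sx (insert u S) = Sx S + (h+1)" unfolding Sx_def using uS fS h2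
        by (simp add: u_def)
      moreover have "Sy (insert u S) = Sy S + (h-1)" unfolding Sy_def using uS fS h2
        by (simp add: u_def)
      moreover have "2*r \<ge> P*(2*t) + P + 2" using dm t s2 by (simp add: algebra_simps)
      ultimately have "Sx (insert u S) \<le> r" "Sy (insert u S) \<le> r" using sxs h by auto
      moreover have "insert u S \<subseteq> L" using SL' uL by auto
      moreover have "int (card (insert u S)) = m" using uS fS S(2) t t0 by simp
      ultimately show ?thesis using build[of "insert u S"] nex fl by auto
    qed
  qed
qed

end
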